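(* For real $r$, the generalized logarithmic mean $L_r$ is stable if and only if $r\in\{-2,-\tfrac12,1\}$ (in which cases $L_{-2}=B_0$, $L_{-1/2}=B_{1/2}$, $L_1=B_1$).
   Context: For $s,t>0$, $s\ne t$: $L_r(s,t)=\big(\frac{t^{r+1}-s^{r+1}}{(r+1)(t-s)}\big)^{1/r}$ for $r\ne-1,0$; $L_{-1}(s,t)=\frac{t-s}{\log t-\log s}$; $L_0(s,t)=\frac1e\big(t^t/s^s\big)^{1/(t-s)}$; $L_r(s,s)=s$. Power mean: $B_r(s,t)=\big(\frac{s^r+t^r}2\big)^{1/r}$ for $r\ne0$, $B_0(s,t)=\sqrt{st}$. A mean $M$ is stable if $M(s,t)=M\big(M(s,M(s,t)),M(M(s,t),t)\big)$ for all $s,t>0$. *)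

theory Defs
  imports Complex_Main
begin

definition genLogMean :: "real \<Rightarrow> real \<Rightarrow> real \<Rightarrow> real" where
  "genLogMean r s t =
     (if s = t then s
      else if r = -1 then (t - s) / (ln t - ln s)
      else if r = 0 then exp (-1) * ((t powr t / s powr s) powr (1 / (t - s)))
      else ((t powr (r + 1) - s powr (r + 1)) / ((r + 1) * (t - s))) powr (1 / r))"

definition powerMean :: "real \<Rightarrow> real \<Rightarrow> real \<Rightarrow> real" where
  "powerMean r s t =
     (if r = 0 then sqrt (s * t) else ((s powr r + t powr r) / 2) powr (1 / r))"

definition stable_mean :: "(real \<Rightarrow> real \<Rightarrow> real) \<Rightarrow> bool" where
  "stable_mean M \<longleftrightarrow>
     (\<forall>s t. s > 0 \<longrightarrow> t > 0 \<longrightarrow> M s t = M (M s (M s t)) (M (M s t) t))"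

end

theory Submission
  imports Defs "HOL-Library.Landau_Symbols" "HOL-Real_Asymp.Real_Asymp"
begin



lemma Ok_add: "f \<in> O[F](h) \<Longrightarrow> g \<in> O[F](h) \<Longrightarrow> (\<lambda>x. f x + g x) \<in> O[F](h)"
  by (rule sum_in_bigo)
lemma Ok_diff: "f \<in> O[F](h) \<Longrightarrow> g \<in> O[F](h) \<Longrightarrow> (\<lambda>x. f x - g x) \<in> O[F](h)"
  by (rule sum_in_bigo)

lemma Ok_cmult: "(f::real\<Rightarrow>real) \<in> O[F](h) \<Longrightarrow> (\<lambda>x. c * f x) \<in> O[F](h)"
  by (cases "c = 0") auto

lemma Ok_mult:
  fixes f g :: "real \<Rightarrow> real"
  assumes "f \<in> O[F](\<lambda>u. u^a)" "g \<in> O[F](\<lambda>u. u^b)"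
  shows "(\<lambda>u. f u * g u) \<in> O[F](\<lambda>u. u^(a+b))"
  using landau_o.big_mult[OF assms] by (simp add: power_add)

lemma Ok_mult':
  fixes f g :: "real \<Rightarrow> real"
  assumes "f \<in> O[F](\<lambda>u. u^a)" "g \<in> O[F](\<lambda>u. u^b)" "a + b = c"
  shows "(\<lambda>u. f u * g u) \<in> O[F](\<lambda>u. u^c)"
  using Ok_mult[OF assms(1,2)] assms(3) by simp

lemma pow_mono_O:
  assumes "a \<le> b"
  shows "(\<lambda>u::real. u^b) \<in> O[at 0](\<lambda>u. u^a)"
proof (rule landau_o.bigI[of 1])
  have "eventually (\<lambda>u::real. \<bar>u\<bar> < 1) (at 0)"
    using eventually_at[of "\<lambda>u::real. \<bar>u\<bar> < 1" 0 UNIV]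
    by (metis dist_real_def diff_zero zero_less_one)
  then show "eventually (\<lambda>u::real. norm (u^b) \<le> 1 * norm (u^a)) (at 0)"
  proof eventually_elim
    case (elim u)
    have "\<bar>u\<bar>^b \<le> \<bar>u\<bar>^a" using assms elim by (intro power_decreasing) auto
    then show ?case by (simp add: power_abs)
  qed
qed simp

lemma Ok_mono: "a \<le> b \<Longrightarrow> f \<in> O[at 0](\<lambda>u::real. u^b) \<Longrightarrow> f \<in> O[at 0](\<lambda>u. u^a)"
  using landau_o.big_trans pow_mono_O by blast

lemma Ok_pow: "(\<lambda>u::real. c * u^k) \<in> O[at 0](\<lambda>u. u^k)"
  by (rule Ok_cmult) simp

lemma Ok_tendsto:
  assumes "f \<in> O[at 0](\<lambda>u::real. u^k)" "k \<ge> 1"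
  shows "(f \<longlongrightarrow> 0) (at 0)"
proof -
  have "((\<lambda>u::real. u^k) \<longlongrightarrow> 0) (at 0)"
    using assms(2) by (auto intro!: tendsto_eq_intros)
  hence "(\<lambda>u::real. u^k) \<in> o[at 0](\<lambda>_. 1)"
    by (intro smalloI_tendsto) auto
  hence "f \<in> o[at 0](\<lambda>_. 1)" using assms(1) landau_o.big_small_trans by blast
  from smalloD_tendsto[OF this] show ?thesis by simp
qed

lemma Ok_compose:
  fixes R g :: "real \<Rightarrow> real"
  assumes R: "R \<in> O[nhds 0](\<lambda>x. x^k)" and g: "g \<in> O[at 0](\<lambda>u. u)" and gl: "(g \<longlongrightarrow> 0) (at 0)"
  shows "(\<lambda>u. R (g u)) \<in> O[at 0](\<lambda>u. u^k)"
proof -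
  have "(\<lambda>u. R (g u)) \<in> O[at 0](\<lambda>u. (g u)^k)"
    using landau_o.big.compose[OF R gl] .
  moreover have "(\<lambda>u. (g u)^k) \<in> O[at 0](\<lambda>u. u^k)"
    using landau_o.big_power[OF g] by simp
  ultimately show ?thesis using landau_o.big_trans by blast
qed

lemma at_to_nhds:
  fixes R :: "real \<Rightarrow> real"
  assumes "R \<in> O[at 0](\<lambda>x. x^k)" "R 0 = 0"
  shows "R \<in> O[nhds 0](\<lambda>x. x^k)"
proof -
  from landau_o.bigE[OF assms(1)] obtain c where c: "c > 0"
    "eventually (\<lambda>x. norm (R x) \<le> c * norm (x^k)) (at 0)" by blast
  from c(2) have "eventually (\<lambda>x. norm (R x) \<le> c * norm (x^k)) (nhds 0)"
    unfolding eventually_at_filter by eventually_elim (use assms(2) c(1) in auto)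
  thus ?thesis by (intro landau_o.bigI[OF c(1)])
qed

lemma coeff_zero:
  assumes "(\<lambda>u::real. c * u^k) \<in> O[at 0](\<lambda>u. u^(Suc k))"
  shows "c = 0"
proof -
  from landau_o.bigE[OF assms] obtain K where K: "K > 0"
    "eventually (\<lambda>x. norm (c * x^k) \<le> K * norm (x^(Suc k))) (at 0)" by blast
  have nz: "eventually (\<lambda>x::real. x \<noteq> 0) (at 0)" by (simp add: eventually_at_filter)
  have "eventually (\<lambda>x::real. \<bar>c\<bar> \<le> K * \<bar>x\<bar>) (at 0)"
    using K(2) nz
  proof eventually_elim
    case (elim x)
    show ?case
    proof (cases "x = 0")
      case False
      have "\<bar>c\<bar> * \<bar>x\<bar>^k \<le> (K * \<bar>x\<bar>) * \<bar>x\<bar>^k" using elim False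
        by (simp add: abs_mult power_abs mult_ac)
      then show ?thesis using False by simp
    qed (use elim in simp)
  qed
  moreover have "((\<lambda>x::real. K * \<bar>x\<bar>) \<longlongrightarrow> 0) (at 0)"
    by (auto intro!: tendsto_eq_intros)
  ultimately have "\<bar>c\<bar> \<le> 0"
    by (intro tendsto_le[of "at (0::real)" "\<lambda>x. K * \<bar>x\<bar>" 0 "\<lambda>_. \<bar>c\<bar>"]) auto
  thus ?thesis by simp
qed

lemma key_alg:
  fixes u h a bb hd d \<alpha> \<beta> :: real
  assumes h: "h = a + bb + 2*hd" and d: "d = (u + (bb - a))/2"
  shows "(3*\<beta>/4 + \<alpha>^3/2) * u^4 = - (h - \<alpha>*u^2 - \<beta>*u^4) + \<alpha>/2 * ((h - \<alpha>*u^2) * (h + \<alpha>*u^2))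
     + \<beta>/8 * (6*(u*u)*(h * h) + (h * h)*(h * h))
     + (a - \<alpha>*((u+h)/2)^2 - \<beta>*((u+h)/2)^4) + (bb - \<alpha>*((u-h)/2)^2 - \<beta>*((u-h)/2)^4)
     + 2*\<alpha> * (u * ((bb - a) + \<alpha>^2*u^3)/2 + (bb - a) * (bb - a)/4)
     + 2*\<beta> * ((u * (bb - a)/2 + (bb - a) * (bb - a)/4) * (d * d + u*u/4))
     + 2 * (hd - \<alpha>*d^2 - \<beta>*d^4)"
  unfolding h d by (simp add: field_simps power2_eq_square power4_eq_xxxx power3_eq_cube)

lemma func_coeff:
  fixes H :: "real \<Rightarrow> real" and \<alpha> \<beta> :: real
  assumes H0: "H 0 = 0"
  and Rexp: "(\<lambda>x. H x - \<alpha>*x^2 - \<beta>*x^4) \<in> O[at 0](\<lambda>x. x^6)"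
  and eq: "\<And>u. H u = H ((u + H u)/2) + H ((u - H u)/2)
                 + 2 * H ((u + H ((u - H u)/2) - H ((u + H u)/2))/2)"
  shows "3*\<beta> = -2*\<alpha>^3"
proof -
  define R where "R x = H x - \<alpha>*x^2 - \<beta>*x^4" for x
  define g1 where "g1 u = (u + H u)/2" for u
  define g2 where "g2 u = (u - H u)/2" for u
  define b where "b u = H (g2 u) - H (g1 u)" for u
  define D where "D u = (u + b u)/2" for u
  have HR: "H x = \<alpha>*x^2 + \<beta>*x^4 + R x" for x by (simp add: R_def)
  have R6: "R \<in> O[at 0](\<lambda>x. x^6)" using Rexp by (simp add: R_def[abs_def])
  have Rn: "R \<in> O[nhds 0](\<lambda>x. x^6)" by (rule at_to_nhds[OF R6]) (simp add: R_def H0)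
  have id1: "(\<lambda>u. u) \<in> O[at 0](\<lambda>u::real. u^1)" by simp
  have H2: "H \<in> O[at 0](\<lambda>u. u^2)"
  proof -
    have "(\<lambda>x. \<alpha>*x^2 + \<beta>*x^4 + R x) \<in> O[at 0](\<lambda>u. u^2)"
      by (intro Ok_add Ok_pow Ok_mono[OF _ Ok_pow] Ok_mono[OF _ R6]) auto
    thus ?thesis by (simp add: HR[abs_def])
  qed
  have Ht: "(H \<longlongrightarrow> 0) (at 0)" by (rule Ok_tendsto[OF H2]) simp
  have g1O: "g1 \<in> O[at 0](\<lambda>u. u)"
    unfolding g1_def[abs_def] using Ok_cmult[OF Ok_add[OF id1 Ok_mono[OF _ H2]], of "1/2"]
    by (simp add: field_simps)
  have g2O: "g2 \<in> O[at 0](\<lambda>u. u)"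
    unfolding g2_def[abs_def] using Ok_cmult[OF Ok_diff[OF id1 Ok_mono[OF _ H2]], of "1/2"]
    by (simp add: field_simps)
  have g1t: "(g1 \<longlongrightarrow> 0) (at 0)" unfolding g1_def[abs_def] using Ht
    by (auto intro!: tendsto_eq_intros)
  have g2t: "(g2 \<longlongrightarrow> 0) (at 0)" unfolding g2_def[abs_def] using Ht
    by (auto intro!: tendsto_eq_intros)
  have Rg1: "(\<lambda>u. R (g1 u)) \<in> O[at 0](\<lambda>u. u^6)" by (rule Ok_compose[OF Rn g1O g1t])
  have Rg2: "(\<lambda>u. R (g2 u)) \<in> O[at 0](\<lambda>u. u^6)" by (rule Ok_compose[OF Rn g2O g2t])
  have g1O1: "g1 \<in> O[at 0](\<lambda>u. u^1)" using g1O by simp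
  have g2O1: "g2 \<in> O[at 0](\<lambda>u. u^1)" using g2O by simp
  have e0: "(\<lambda>u. H u - \<alpha>*u^2) \<in> O[at 0](\<lambda>u. u^4)"
  proof -
    have "(\<lambda>u. \<beta>*u^4 + R u) \<in> O[at 0](\<lambda>u. u^4)"
      by (intro Ok_add Ok_pow Ok_mono[OF _ R6]) auto
    thus ?thesis by (simp add: HR)
  qed
  have H2a: "(\<lambda>u. H u + \<alpha>*u^2) \<in> O[at 0](\<lambda>u. u^2)"
    by (intro Ok_add H2 Ok_pow)
  have HH: "(\<lambda>u. H u * H u) \<in> O[at 0](\<lambda>u. u^4)"
    using Ok_mult[OF H2 H2] by simp
  have b0_eq: "b u + \<alpha>^2*u^3 = - \<alpha> * (u * (H u - \<alpha>*u^2)) - \<beta>/2 * (u * H u * (u*u + H u * H u))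
      + R (g2 u) - R (g1 u)" for u
  proof -
    have h1: "H (g1 u) = \<alpha>*(g1 u)^2 + \<beta>*(g1 u)^4 + R (g1 u)" by (rule HR)
    have h2: "H (g2 u) = \<alpha>*(g2 u)^2 + \<beta>*(g2 u)^4 + R (g2 u)" by (rule HR)
    show ?thesis unfolding b_def h1 h2 unfolding g1_def g2_def
      by (simp add: field_simps power2_eq_square power4_eq_xxxx power3_eq_cube)
  qed
  have b0: "(\<lambda>u. b u + \<alpha>^2*u^3) \<in> O[at 0](\<lambda>u. u^5)"
  proof -
    have t1: "(\<lambda>u. u * (H u - \<alpha>*u^2)) \<in> O[at 0](\<lambda>u. u^5)"
      using Ok_mult[OF id1 e0] by simp
    have uu: "(\<lambda>u. u*u) \<in> O[at 0](\<lambda>u::real. u^2)" unfolding power2_eq_square by simp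
    have t2: "(\<lambda>u. u * H u * (u*u + H u * H u)) \<in> O[at 0](\<lambda>u. u^5)"
      by (rule Ok_mult'[OF Ok_mult'[OF id1 H2 refl] Ok_add[OF uu Ok_mono[of 2 4, OF _ HH]]]) simp_all
    show ?thesis unfolding b0_eq
      by (intro Ok_add Ok_diff Ok_cmult t1 t2 Ok_mono[OF _ Rg1] Ok_mono[OF _ Rg2]) auto
  qed
  have b3: "b \<in> O[at 0](\<lambda>u. u^3)"
  proof -
    have "(\<lambda>u. (b u + \<alpha>^2*u^3) - \<alpha>^2*u^3) \<in> O[at 0](\<lambda>u. u^3)"
      by (intro Ok_diff Ok_mono[OF _ b0] Ok_pow) auto
    thus ?thesis by simp
  qed
  have DO: "D \<in> O[at 0](\<lambda>u. u)"
    unfolding D_def[abs_def] using Ok_cmult[OF Ok_add[OF id1 Ok_mono[OF _ b3]], of "1/2"]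
    by (simp add: field_simps)
  have bt: "(b \<longlongrightarrow> 0) (at 0)" by (rule Ok_tendsto[OF b3]) simp
  have Dt: "(D \<longlongrightarrow> 0) (at 0)" unfolding D_def[abs_def] using bt
    by (auto intro!: tendsto_eq_intros)
  have RD: "(\<lambda>u. R (D u)) \<in> O[at 0](\<lambda>u. u^6)" by (rule Ok_compose[OF Rn DO Dt])
  define c where "c = 3*\<beta>/4 + \<alpha>^3/2"
  have key: "c * u^4 = - R u + \<alpha>/2 * ((H u - \<alpha>*u^2) * (H u + \<alpha>*u^2))
     + \<beta>/8 * (6*(u*u)*(H u * H u) + (H u * H u)*(H u * H u))
     + R (g1 u) + R (g2 u)
     + 2*\<alpha> * (u * (b u + \<alpha>^2*u^3)/2 + b u * b u/4)
     + 2*\<beta> * ((u * b u/2 + b u * b u/4) * (D u * D u + u*u/4))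
     + 2 * R (D u)" for u
  proof -
    have e: "H u = H (g1 u) + H (g2 u) + 2 * H (D u)"
      using eq[of u] by (simp add: D_def b_def g1_def g2_def add_diff_eq)
    have d: "D u = (u + (H (g2 u) - H (g1 u)))/2" by (simp add: D_def b_def)
    have k: "c * u^4 = - (H u - \<alpha>*u^2 - \<beta>*u^4) + \<alpha>/2 * ((H u - \<alpha>*u^2) * (H u + \<alpha>*u^2))
     + \<beta>/8 * (6*(u*u)*(H u * H u) + (H u * H u)*(H u * H u))
     + (H (g1 u) - \<alpha>*(g1 u)^2 - \<beta>*(g1 u)^4) + (H (g2 u) - \<alpha>*(g2 u)^2 - \<beta>*(g2 u)^4)
     + 2*\<alpha> * (u * ((H (g2 u) - H (g1 u)) + \<alpha>^2*u^3)/2 + (H (g2 u) - H (g1 u)) * (H (g2 u) - H (g1 u))/4)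
     + 2*\<beta> * ((u * (H (g2 u) - H (g1 u))/2 + (H (g2 u) - H (g1 u)) * (H (g2 u) - H (g1 u))/4) * (D u * D u + u*u/4))
     + 2 * (H (D u) - \<alpha>*(D u)^2 - \<beta>*(D u)^4)"
      unfolding c_def using key_alg[OF e d] by (simp add: g1_def g2_def)
    show ?thesis unfolding R_def b_def using k by simp
  qed
  have "(\<lambda>u. c * u^4) \<in> O[at 0](\<lambda>u. u^(Suc 4))"
  proof -
    have uu: "(\<lambda>u. u*u) \<in> O[at 0](\<lambda>u::real. u^2)" unfolding power2_eq_square by simp
    have X: "(\<lambda>u. (H u - \<alpha>*u^2) * (H u + \<alpha>*u^2)) \<in> O[at 0](\<lambda>u. u^6)"
      using Ok_mult[OF e0 H2a] by simp
    have W: "(\<lambda>u. 6*(u*u)*(H u * H u) + (H u * H u)*(H u * H u)) \<in> O[at 0](\<lambda>u. u^6)"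
    proof -
      have w1: "(\<lambda>u. (u*u)*(H u * H u)) \<in> O[at 0](\<lambda>u. u^6)" by (rule Ok_mult'[OF uu HH]) simp
      have w2: "(\<lambda>u. (H u * H u)*(H u * H u)) \<in> O[at 0](\<lambda>u. u^6)"
        by (rule Ok_mono[of 6 8]) (simp_all add: Ok_mult'[OF HH HH])
      show ?thesis using Ok_add[OF Ok_cmult[OF w1, of 6] w2] by (simp add: mult.assoc)
    qed
    have bb: "(\<lambda>u. b u * b u) \<in> O[at 0](\<lambda>u. u^6)" using Ok_mult[OF b3 b3] by simp
    have Y: "(\<lambda>u. u * (b u + \<alpha>^2*u^3)/2 + b u * b u/4) \<in> O[at 0](\<lambda>u. u^6)"
    proof -
      have y1: "(\<lambda>u. u * (b u + \<alpha>^2*u^3)) \<in> O[at 0](\<lambda>u. u^6)" by (rule Ok_mult'[OF id1 b0]) simp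
      show ?thesis using Ok_add[OF Ok_cmult[OF y1, of "1/2"] Ok_cmult[OF bb, of "1/4"]] by simp
    qed
    have DO1: "D \<in> O[at 0](\<lambda>u. u^1)" using DO by simp
    have Z: "(\<lambda>u. (u * b u/2 + b u * b u/4) * (D u * D u + u*u/4)) \<in> O[at 0](\<lambda>u. u^6)"
    proof -
      have "(\<lambda>u. u * b u/2 + b u * b u/4) \<in> O[at 0](\<lambda>u. u^4)"
      proof -
        have z1: "(\<lambda>u. u * b u) \<in> O[at 0](\<lambda>u. u^4)" by (rule Ok_mult'[OF id1 b3]) simp
        have z2: "(\<lambda>u. b u * b u) \<in> O[at 0](\<lambda>u. u^4)" by (rule Ok_mono[OF _ bb]) simp
        show ?thesis using Ok_add[OF Ok_cmult[OF z1, of "1/2"] Ok_cmult[OF z2, of "1/4"]] by simp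
      qed
      moreover have "(\<lambda>u. D u * D u + u*u/4) \<in> O[at 0](\<lambda>u. u^2)"
      proof -
        have "(\<lambda>u. D u * D u) \<in> O[at 0](\<lambda>u. u^2)" by (rule Ok_mult'[OF DO1 DO1]) simp
        then show ?thesis using Ok_add[OF _ Ok_cmult[OF uu, of "1/4"]] by simp
      qed
      ultimately show ?thesis by (rule Ok_mult') simp
    qed
    have "(\<lambda>u. - R u + \<alpha>/2 * ((H u - \<alpha>*u^2) * (H u + \<alpha>*u^2))
     + \<beta>/8 * (6*(u*u)*(H u * H u) + (H u * H u)*(H u * H u))
     + R (g1 u) + R (g2 u)
     + 2*\<alpha> * (u * (b u + \<alpha>^2*u^3)/2 + b u * b u/4)
     + 2*\<beta> * ((u * b u/2 + b u * b u/4) * (D u * D u + u*u/4))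
     + 2 * R (D u)) \<in> O[at 0](\<lambda>u. u^6)"
      by (intro Ok_add Ok_cmult X W Y Z Rg1 Rg2 RD) (use R6 in simp)
    then have "(\<lambda>u. c * u^4) \<in> O[at 0](\<lambda>u. u^6)" by (simp only: key)
    then show ?thesis by (rule Ok_mono[rotated]) simp
  qed
  then have "c = 0" by (rule coeff_zero)
  then show ?thesis by (simp add: c_def)
qed



definition Hf :: "real \<Rightarrow> real \<Rightarrow> real" where
  "Hf r d = (if d = 0 then 0
     else if r = -1 then ln ((exp d - exp (-d)) / (2*d))
     else if r = 0 then d * (exp d + exp (-d)) / (exp d - exp (-d)) - 1
     else ln ((exp ((r+1)*d) - exp (-((r+1)*d))) / ((r+1) * (exp d - exp (-d)))) / r)"

lemma sinh_pos: "v \<noteq> 0 \<Longrightarrow> (exp v - exp (-v)) / v > (0::real)"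
proof (cases "v > 0")
  case True then show ?thesis by (intro divide_pos_pos) auto
next
  case False
  assume "v \<noteq> 0" with False have "v < 0" by simp
  then show ?thesis by (intro divide_neg_neg) auto
qed

lemma L_exp:
  fixes r c d :: real
  shows "genLogMean r (exp (c - d)) (exp (c + d)) = exp (c + Hf r d)"
proof (cases "d = 0")
  case True then show ?thesis by (simp add: genLogMean_def Hf_def)
next
  case d: False
  have ne: "exp (c - d) \<noteq> exp (c + d)" using d by simp
  have ed: "exp d - exp (-d) \<noteq> 0" using sinh_pos[OF d] by auto
  have split1: "exp (c + d) = exp c * exp d" "exp (c - d) = exp c * exp (-d)"
    by (simp_all add: exp_add[symmetric] exp_diff)
  show ?thesis
  proof (cases "r = -1")
    case r: True
    have Q: "(exp d - exp (-d)) / (2*d) > 0" using sinh_pos[OF d] by simp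
    have "genLogMean r (exp (c - d)) (exp (c + d)) = (exp (c + d) - exp (c - d)) / (2*d)"
      using ne r d by (simp add: genLogMean_def)
    also have "\<dots> = exp c * ((exp d - exp (-d)) / (2*d))"
      by (simp add: split1 field_simps)
    also have "\<dots> = exp (c + ln ((exp d - exp (-d)) / (2*d)))"
      using Q by (simp add: exp_add)
    finally show ?thesis using r d by (simp add: Hf_def)
  next
    case r1: False
    show ?thesis
    proof (cases "r = 0")
      case r: True
      have "genLogMean r (exp (c - d)) (exp (c + d)) =
          exp (-1) * exp ((exp (c + d) * (c + d) - exp (c - d) * (c - d)) / (exp (c + d) - exp (c - d)))"
        using ne r by (simp add: genLogMean_def powr_def exp_diff[symmetric] field_simps)
      also have "\<dots> = exp (c + Hf r d)"
      proof -
        have "(exp (c + d) * (c + d) - exp (c - d) * (c - d)) / (exp (c + d) - exp (c - d))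
            = c + d * (exp d + exp (-d)) / (exp d - exp (-d))"
          using ed by (simp add: split1 field_simps)
        then show ?thesis using r d by (simp add: Hf_def exp_add[symmetric])
      qed
      finally show ?thesis .
    next
      case r0: False
      define p where "p = r + 1"
      have p0: "p \<noteq> 0" using r1 by (simp add: p_def)
      define Q where "Q = (exp (p*d) - exp (-(p*d))) / (p * (exp d - exp (-d)))"
      have Qeq: "Q = ((exp (p*d) - exp (-(p*d))) / (p*d)) / ((exp d - exp (-d)) / d)"
        unfolding Q_def using d p0 by (simp add: field_simps)
      have Qpos: "Q > 0" unfolding Qeq by (intro divide_pos_pos sinh_pos) (use d p0 in auto)
      have pow: "exp x powr p = exp (p * x)" for x by (simp add: powr_def)
      have "(exp (c + d) powr (r + 1) - exp (c - d) powr (r + 1)) / ((r + 1) * (exp (c + d) - exp (c - d)))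
          = exp (r * c) * Q"
      proof -
        have e1: "exp (c+d) powr p = exp (r*c) * exp c * exp (p*d)"
          unfolding pow by (simp add: exp_add[symmetric] p_def algebra_simps)
        have e2: "exp (c-d) powr p = exp (r*c) * exp c * exp (-(p*d))"
          unfolding pow by (simp add: exp_add[symmetric] p_def algebra_simps)
        show ?thesis unfolding Q_def p_def[symmetric] unfolding e1 e2 unfolding split1
          using ed p0 by (simp add: field_simps)
      qed
      then have "genLogMean r (exp (c - d)) (exp (c + d)) = (exp (r * c) * Q) powr (1 / r)"
        using ne r1 r0 by (simp add: genLogMean_def)
      also have "\<dots> = exp (c + ln Q / r)"
        using Qpos r0 by (simp add: powr_def ln_mult field_simps)
      finally show ?thesis using r1 r0 d by (simp add: Hf_def Q_def p_def)
    qed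
  qed
qed

lemma L_exp2: "genLogMean r (exp a) (exp b) = exp ((a + b)/2 + Hf r ((b - a)/2))"
  using L_exp[of r "(a+b)/2" "(b-a)/2"] by (simp add: field_simps)




lemma aux_lin: "(h::real) = h/2 + (A + B)/2 + X \<Longrightarrow> h = A + B + 2*X" by (simp add: field_simps)

lemma lnq: "(A::real) > 0 \<Longrightarrow> B > 0 \<Longrightarrow> ln (A/B) = ln A - ln B" by (simp add: ln_div)

lemma stable_H:
  assumes st: "stable_mean (genLogMean r)"
  shows "Hf r u = Hf r ((u + Hf r u)/2) + Hf r ((u - Hf r u)/2)
                 + 2 * Hf r ((u + Hf r ((u - Hf r u)/2) - Hf r ((u + Hf r u)/2))/2)"
proof -
  define H where "H = Hf r"
  define M where "M = genLogMean r"
  have LE: "M (exp a) (exp b) = exp ((a + b)/2 + H ((b - a)/2))" for a b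
    unfolding M_def H_def by (rule L_exp2)
  have s: "M (exp (-u)) (exp u) = M (M (exp (-u)) (M (exp (-u)) (exp u))) (M (M (exp (-u)) (exp u)) (exp u))"
    using st unfolding stable_mean_def M_def by auto
  have m: "M (exp (-u)) (exp u) = exp (H u)" using LE[of "-u" u] by simp
  define a1 where "a1 = (H u - u)/2 + H ((H u + u)/2)"
  define b1 where "b1 = (H u + u)/2 + H ((u - H u)/2)"
  have A: "M (exp (-u)) (exp (H u)) = exp a1" using LE[of "-u" "H u"] by (simp add: a1_def)
  have B: "M (exp (H u)) (exp u) = exp b1" using LE[of "H u" u] by (simp add: b1_def)
  have "exp (H u) = exp ((a1 + b1)/2 + H ((b1 - a1)/2))"
    using s unfolding m unfolding A B unfolding LE .
  hence e: "H u = (a1 + b1)/2 + H ((b1 - a1)/2)" by simp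
  have d: "(b1 - a1)/2 = (u + H ((u - H u)/2) - H ((u + H u)/2))/2"
    by (simp add: a1_def b1_def add.commute field_simps)
  have c: "(H u + u)/2 = (u + H u)/2" by (simp add: add.commute)
  have e2: "(a1 + b1)/2 = H u/2 + (H ((u + H u)/2) + H ((u - H u)/2))/2"
    unfolding a1_def b1_def c by (simp add: field_simps)
  have "H u = H ((u + H u)/2) + H ((u - H u)/2) + 2 * H ((u + H ((u - H u)/2) - H ((u + H u)/2))/2)"
    using e unfolding e2 d by (rule aux_lin)
  then show ?thesis by (simp only: H_def)
qed

definition S :: "real \<Rightarrow> real" where "S v = ln ((exp v - exp (-v)) / (2*v))"

lemma ES: "(\<lambda>v. S v - v^2/6 + v^4/180) \<in> O[at 0](\<lambda>v. v^6)"
  unfolding S_def by real_asymp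

lemma EC: "(\<lambda>d::real. d*(exp d + exp(-d))/(exp d - exp(-d)) - 1 - d^2/3 + d^4/45) \<in> O[at 0](\<lambda>d. d^6)"
  by real_asymp

lemma Hf_exp_cong:
  assumes "\<And>x. x \<noteq> 0 \<Longrightarrow> Hf r x - \<alpha>*x^2 - \<beta>*x^4 = f x" "f \<in> O[at 0](\<lambda>x. x^6)"
  shows "(\<lambda>x. Hf r x - \<alpha>*x^2 - \<beta>*x^4) \<in> O[at 0](\<lambda>x. x^6)"
proof -
  have "eventually (\<lambda>x::real. x \<noteq> 0) (at 0)" by (simp add: eventually_at_filter)
  hence "eventually (\<lambda>x. f x = Hf r x - \<alpha>*x^2 - \<beta>*x^4) (at 0)"
    by eventually_elim (simp add: assms(1))
  from landau_o.big.in_cong[OF this] assms(2) show ?thesis by simp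
qed

lemma Hf_stable_coeff:
  assumes "stable_mean (genLogMean r)"
    "(\<lambda>x. Hf r x - \<alpha>*x^2 - \<beta>*x^4) \<in> O[at 0](\<lambda>x. x^6)"
  shows "3*\<beta> = -2*\<alpha>^3"
  by (rule func_coeff[OF _ assms(2) stable_H[OF assms(1)]]) (simp add: Hf_def)

lemma stable_imp:
  assumes st: "stable_mean (genLogMean r)"
  shows "r \<in> {-2, -1/2, 1}"
proof -
  consider "r = -1" | "r = 0" | "r \<noteq> -1" "r \<noteq> 0" by blast
  then show ?thesis
  proof cases
    case 1
    have "(\<lambda>x. Hf r x - (1/6)*x^2 - (-1/180)*x^4) \<in> O[at 0](\<lambda>x. x^6)"
      by (rule Hf_exp_cong[OF _ ES]) (simp add: Hf_def S_def 1)
    from Hf_stable_coeff[OF st this] have False by (simp add: power3_eq_cube)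
    then show ?thesis ..
  next
    case 2
    have "(\<lambda>x. Hf r x - (1/3)*x^2 - (-1/45)*x^4) \<in> O[at 0](\<lambda>x. x^6)"
      by (rule Hf_exp_cong[OF _ EC]) (simp add: Hf_def 2)
    from Hf_stable_coeff[OF st this] have False by (simp add: power3_eq_cube)
    then show ?thesis ..
  next
    case 3
    define p where "p = r + 1"
    have p0: "p \<noteq> 0" using 3 by (simp add: p_def)
    define E where "E v = S v - v^2/6 + v^4/180" for v
    have En: "E \<in> O[nhds 0](\<lambda>v. v^6)"
      by (rule at_to_nhds) (use ES in \<open>simp_all add: E_def[abs_def] S_def\<close>)
    have pO: "(\<lambda>x. p * x) \<in> O[at 0](\<lambda>x. x)" by (rule Ok_cmult) simp
    have pt: "((\<lambda>x. p * x) \<longlongrightarrow> 0) (at 0)" by (auto intro!: tendsto_eq_intros)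
    have Ep: "(\<lambda>x. E (p * x)) \<in> O[at 0](\<lambda>x. x^6)" by (rule Ok_compose[OF En pO pt])
    have E1: "E \<in> O[at 0](\<lambda>x. x^6)" using ES by (simp add: E_def[abs_def])
    have Ef: "(\<lambda>x. (E (p * x) - E x) / r) \<in> O[at 0](\<lambda>x. x^6)"
      using Ok_cmult[OF Ok_diff[OF Ep E1], of "1/r"] by simp
    define \<alpha> where "\<alpha> = (r+2)/6"
    define \<beta> where "\<beta> = -((r+1)^2+1)*(r+2)/180"
    have "(\<lambda>x. Hf r x - \<alpha>*x^2 - \<beta>*x^4) \<in> O[at 0](\<lambda>x. x^6)"
    proof (rule Hf_exp_cong[OF _ Ef])
      fix x :: real assume x: "x \<noteq> 0"
      have px: "p * x \<noteq> 0" using x p0 by simp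
      have q1: "(exp (p*x) - exp (-(p*x))) / (2*(p*x)) > 0" using sinh_pos[OF px] by simp
      have q2: "(exp x - exp (-x)) / (2*x) > 0" using sinh_pos[OF x] by simp
      have Q: "(exp (p*x) - exp (-(p*x))) / (p * (exp x - exp (-x)))
          = ((exp (p*x) - exp (-(p*x))) / (2*(p*x))) / ((exp x - exp (-x)) / (2*x))"
        using x p0 by (simp add: field_simps)
      have "Hf r x = ln ((exp (p*x) - exp (-(p*x))) / (p * (exp x - exp (-x)))) / r"
        using x 3 by (simp add: Hf_def p_def)
      also have "\<dots> = (S (p*x) - S x) / r"
        unfolding Q lnq[OF q1 q2] S_def by simp
      finally have "Hf r x = (S (p*x) - S x) / r" .
      then show "Hf r x - \<alpha>*x^2 - \<beta>*x^4 = (E (p * x) - E x) / r"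
        unfolding E_def \<alpha>_def \<beta>_def p_def using 3
        by (simp add: field_simps power2_eq_square power4_eq_xxxx)
    qed
    from Hf_stable_coeff[OF st this] have "3*\<beta> = -2*\<alpha>^3" .
    hence "(r + 2) * (2*r + 1) * (r - 1) = 0"
      unfolding \<alpha>_def \<beta>_def by (simp add: field_simps power2_eq_square power3_eq_cube)
    then show ?thesis by auto
  qed
qed




lemma gLM_gen: "s \<noteq> t \<Longrightarrow> r \<noteq> -1 \<Longrightarrow> r \<noteq> 0 \<Longrightarrow>
  genLogMean r s t = ((t powr (r+1) - s powr (r+1)) / ((r+1)*(t-s))) powr (1/r)"
  by (simp add: genLogMean_def)

lemma L1: "0 < s \<Longrightarrow> 0 < t \<Longrightarrow> genLogMean 1 s t = (s + t)/2"
proof -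
  assume s: "0 < s" and t: "0 < t"
  show ?thesis
  proof (cases "s = t")
    case True then show ?thesis by (simp add: genLogMean_def)
  next
    case False
    have r: "(t powr (1 + 1) - s powr (1 + 1)) / ((1 + 1) * (t - s)) = (s + t)/2"
      using s t False by (simp add: powr_numeral power2_eq_square field_simps)
    have "genLogMean 1 s t = ((s + t)/2) powr (1/1)"
      using gLM_gen[of s t 1] False unfolding r by simp
    also have "\<dots> = (s+t)/2" using s t by simp
    finally show ?thesis .
  qed
qed

lemma Lm2: "0 < s \<Longrightarrow> 0 < t \<Longrightarrow> genLogMean (-2) s t = sqrt (s * t)"
proof -
  assume s: "0 < s" and t: "0 < t"
  show ?thesis
  proof (cases "s = t")
    case True then show ?thesis using s by (simp add: genLogMean_def)
  next
    case False
    have r: "(t powr (-2 + 1) - s powr (-2 + 1)) / ((-2 + 1) * (t - s)) = inverse (s * t)"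
      using s t False by (simp add: powr_minus field_simps)
    have "genLogMean (-2) s t = inverse (s * t) powr (1 / -2)"
      using gLM_gen[of s t "-2"] False unfolding r by simp
    also have "\<dots> = inverse (inverse (s*t) powr (1/2))"
      by (simp add: powr_minus[symmetric])
    also have "\<dots> = inverse (inverse ((s*t) powr (1/2)))"
      by (subst inverse_powr) (use s t in auto)
    also have "\<dots> = sqrt (s * t)" using s t by (simp add: powr_half_sqrt)
    finally show ?thesis .
  qed
qed

lemma sq_assoc: "0 \<le> t \<Longrightarrow> sqrt t * (sqrt t * c) = t * c"
  by (simp add: mult.assoc[symmetric])

lemma Lh: "0 < s \<Longrightarrow> 0 < t \<Longrightarrow> genLogMean (-1/2) s t = ((sqrt s + sqrt t)/2)^2"
proof -
  assume s: "0 < s" and t: "0 < t"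
  show ?thesis
  proof (cases "s = t")
    case True then show ?thesis using s by (simp add: genLogMean_def power2_eq_square)
  next
    case False
    have st: "sqrt s \<noteq> sqrt t" using False s t by simp
    have ps: "sqrt s + sqrt t > 0" using s t by (simp add: add_pos_pos)
    have ts: "t - s = (sqrt t - sqrt s) * (sqrt t + sqrt s)"
    proof -
      have "(sqrt t - sqrt s) * (sqrt t + sqrt s) = (sqrt t)^2 - (sqrt s)^2"
        by (simp add: algebra_simps power2_eq_square)
      then show ?thesis using s t by simp
    qed
    have r: "(t powr (-1/2 + 1) - s powr (-1/2 + 1)) / ((-1/2 + 1) * (t - s)) = 2 / (sqrt s + sqrt t)"
    proof -
      have h: "(-1/2 + 1 :: real) = 1/2" by simp
      have "sqrt t - sqrt s \<noteq> 0" using st by simp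
      then show ?thesis unfolding h ts using s t ps
        by (simp add: powr_half_sqrt field_simps sq_assoc)
    qed
    have "genLogMean (-1/2) s t = (2 / (sqrt s + sqrt t)) powr (1 / (-1/2))"
      using gLM_gen[of s t "-1/2"] False unfolding r by simp
    also have "\<dots> = inverse ((2 / (sqrt s + sqrt t)) powr 2)"
      by (simp add: powr_minus[symmetric])
    also have "\<dots> = ((sqrt s + sqrt t)/2)^2"
      using ps by (simp add: powr_numeral power_divide)
    finally show ?thesis .
  qed
qed




lemma stab1: "stable_mean (genLogMean 1)"
  unfolding stable_mean_def
proof (intro allI impI)
  fix s t :: real assume s: "0 < s" and t: "0 < t"
  have m: "genLogMean 1 s t = (s+t)/2" by (rule L1) (use s t in auto)
  have a: "genLogMean 1 s ((s+t)/2) = (s + (s+t)/2)/2" by (rule L1) (use s t in auto)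
  have b: "genLogMean 1 ((s+t)/2) t = ((s+t)/2 + t)/2" by (rule L1) (use s t in auto)
  have p1: "0 < (s + (s+t)/2)/2" using s t by (intro divide_pos_pos add_pos_pos) auto
  have p2: "0 < ((s+t)/2 + t)/2" using s t by (intro divide_pos_pos add_pos_pos) auto
  have c: "genLogMean 1 ((s + (s+t)/2)/2) (((s+t)/2 + t)/2) = ((s + (s+t)/2)/2 + ((s+t)/2 + t)/2)/2"
    by (rule L1[OF p1 p2])
  show "genLogMean 1 s t = genLogMean 1 (genLogMean 1 s (genLogMean 1 s t)) (genLogMean 1 (genLogMean 1 s t) t)"
    unfolding m a b c by (simp add: field_simps)
qed

lemma stabm2: "stable_mean (genLogMean (-2))"
  unfolding stable_mean_def
proof (intro allI impI)
  fix s t :: real assume s: "0 < s" and t: "0 < t"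
  define m where "m = sqrt (s*t)"
  have mp: "m > 0" using s t by (simp add: m_def)
  have mm: "m * m = s * t" using s t by (simp add: m_def)
  have e: "genLogMean (-2) s t = m" using Lm2 s t by (simp add: m_def)
  have a: "genLogMean (-2) s m = sqrt (s*m)" using Lm2 s mp by simp
  have b: "genLogMean (-2) m t = sqrt (m*t)" using Lm2 t mp by simp
  have c: "genLogMean (-2) (sqrt (s*m)) (sqrt (m*t)) = sqrt (sqrt (s*m) * sqrt (m*t))"
    using Lm2 s t mp by simp
  have d: "sqrt (s*m) * sqrt (m*t) = s * t"
  proof -
    have "sqrt (s*m) * sqrt (m*t) = sqrt ((s*t) * (m*m))" by (simp add: real_sqrt_mult[symmetric] mult_ac)
    also have "\<dots> = sqrt ((s*t)^2)" by (simp add: mm power2_eq_square)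
    also have "\<dots> = s*t" using s t by simp
    finally show ?thesis .
  qed
  show "genLogMean (-2) s t = genLogMean (-2) (genLogMean (-2) s (genLogMean (-2) s t)) (genLogMean (-2) (genLogMean (-2) s t) t)"
    unfolding e a b c d by (simp add: m_def)
qed

lemma stabh: "stable_mean (genLogMean (-1/2))"
  unfolding stable_mean_def
proof (intro allI impI)
  fix s t :: real assume s: "0 < s" and t: "0 < t"
  define M where "M x y = ((sqrt x + sqrt y)/2)^2" for x y :: real
  have Mp: "0 < x \<Longrightarrow> 0 < y \<Longrightarrow> 0 < M x y" for x y
  proof -
    assume "0 < x" "0 < y"
    then have "sqrt x + sqrt y > 0" by (simp add: add_pos_pos)
    then show ?thesis unfolding M_def by simp
  qed
  have Ms: "0 < x \<Longrightarrow> 0 < y \<Longrightarrow> sqrt (M x y) = (sqrt x + sqrt y)/2" for x y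
  proof -
    assume "0 < x" "0 < y"
    then have "sqrt x + sqrt y > 0" by (simp add: add_pos_pos)
    then show ?thesis unfolding M_def by simp
  qed
  have L: "0 < x \<Longrightarrow> 0 < y \<Longrightarrow> genLogMean (-1/2) x y = M x y" for x y
    using Lh by (simp add: M_def)
  have m: "genLogMean (-1/2) s t = M s t" using L s t by simp
  have mp: "0 < M s t" using Mp s t .
  have a: "genLogMean (-1/2) s (M s t) = M s (M s t)" using L s mp by simp
  have b: "genLogMean (-1/2) (M s t) t = M (M s t) t" using L t mp by simp
  have c: "genLogMean (-1/2) (M s (M s t)) (M (M s t) t) = M (M s (M s t)) (M (M s t) t)"
    using L Mp s t mp by simp
  have d: "M (M s (M s t)) (M (M s t) t) = M s t"
    unfolding M_def[of "M s (M s t)"] M_def[of _ "M (M s t) t"] Ms[OF s mp] Ms[OF mp t] Ms[OF s t]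
    unfolding M_def using s t by (simp add: field_simps power2_eq_square sq_assoc)
  show "genLogMean (-1/2) s t = genLogMean (-1/2) (genLogMean (-1/2) s (genLogMean (-1/2) s t)) (genLogMean (-1/2) (genLogMean (-1/2) s t) t)"
    unfolding m a b c d ..
qed

theorem mainTheorem15:
  fixes r :: real
  shows "(stable_mean (genLogMean r) \<longleftrightarrow> r \<in> {-2, -1/2, 1})
    \<and> (\<forall>s>0. \<forall>t>0. genLogMean (-2) s t = powerMean 0 s t)
    \<and> (\<forall>s>0. \<forall>t>0. genLogMean (-1/2) s t = powerMean (1/2) s t)
    \<and> (\<forall>s>0. \<forall>t>0. genLogMean 1 s t = powerMean 1 s t)"
proof (intro conjI allI impI)
  show "stable_mean (genLogMean r) \<longleftrightarrow> r \<in> {-2, -1/2, 1}"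
  proof
    assume "stable_mean (genLogMean r)" then show "r \<in> {-2, -1/2, 1}" by (rule stable_imp)
  next
    assume "r \<in> {-2, -1/2, 1}"
    then show "stable_mean (genLogMean r)" using stab1 stabm2 stabh by auto
  qed
next
  fix s t :: real assume "0 < s" "0 < t"
  then show "genLogMean (-2) s t = powerMean 0 s t" by (simp add: Lm2 powerMean_def)
next
  fix s t :: real assume s: "0 < s" and t: "0 < t"
  have p: "0 < (s powr (1/2) + t powr (1/2))/2" using s t by (simp add: add_pos_pos)
  have "powerMean (1/2) s t = ((s powr (1/2) + t powr (1/2))/2) powr 2"
    by (simp add: powerMean_def)
  also have "\<dots> = ((sqrt s + sqrt t)/2)^2" using s t p by (simp add: powr_half_sqrt powr_numeral)
  finally show "genLogMean (-1/2) s t = powerMean (1/2) s t" using Lh s t by simp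
next
  fix s t :: real assume s: "0 < s" and t: "0 < t"
  show "genLogMean 1 s t = powerMean 1 s t" unfolding L1[OF s t] using s t
    by (simp add: powerMean_def)
qed


end
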